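(* Let $L$ be a positive integer, let $\omega_1,\omega_2$ be completely multiplicative complex-valued functions on the positive integers, and let $K$ be an arbitrary complex-valued function on the positive divisors of $L$. For $g\mid L$ define \[ J(g)=\sum_{a\mid g}\sum_{b\mid \frac Lg}\mu(a)\mu(b)\omega_2(a)\omega_1(b)\,K\Big(\frac{bg}{a}\Big). \] Then for every factorization $L=AB$, \[ K(B)=\Big(\prod_{p\mid L}(1-\omega_1(p)\omega_2(p))^{-1}\Big)\sum_{\substack{d\mid A,\ e\mid B\\ (d,e)=1}}\omega_1(d)\omega_2(e)\,J\Big(\frac{Bd}{e}\Big). \]
   Context: $\mu$ is the Möbius function; the product is over primes $p$ dividing $L$. *)

theory Defs
  imports "HOL-Computational_Algebra.Computational_Algebra"
begin

definition moebius_mu :: "nat \<Rightarrow> complex" where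
  "moebius_mu n = (if n = 0 \<or> \<not> squarefree n then 0
                   else (-1) ^ card (prime_factors n))"

definition completely_multiplicative :: "(nat \<Rightarrow> complex) \<Rightarrow> bool" where
  "completely_multiplicative f \<longleftrightarrow>
     f 1 = 1 \<and> (\<forall>m n. m > 0 \<longrightarrow> n > 0 \<longrightarrow> f (m * n) = f m * f n)"

end

theory Submission
  imports Defs
begin


lemma divsum_mult:
  fixes X Y :: nat
  assumes "coprime X Y" "X > 0" "Y > 0"
  shows "(\<Sum>a\<in>{a. a dvd X*Y}. f a) = (\<Sum>x\<in>{x. x dvd X}. \<Sum>y\<in>{y. y dvd Y}. f (x*y))"
proof -
  have fin: "finite {x. x dvd X}" "finite {y. y dvd Y}" using assms by auto
  have bij: "bij_betw (\<lambda>(x,y). x*y) ({x. x dvd X} \<times> {y. y dvd Y}) {a. a dvd X*Y}"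
  proof (rule bij_betw_imageI)
    show "inj_on (\<lambda>(x,y). x*y) ({x. x dvd X} \<times> {y. y dvd Y})"
    proof (rule inj_onI, clarsimp)
      fix x y x' y' :: nat
      assume h: "x dvd X" "y dvd Y" "x' dvd X" "y' dvd Y" "x*y = x'*y'"
      have c1: "coprime y X" "coprime y' X" "coprime x Y" "coprime x' Y"
        using h assms(1) by (auto intro: coprime_imp_coprime dvd_trans simp: coprime_commute)
      have "gcd (x*y) X = x" using c1 h by (metis gcd_mult_left_right_cancel coprime_commute gcd_nat.absorb1)
      moreover have "gcd (x'*y') X = x'" using c1 h by (metis gcd_mult_left_right_cancel coprime_commute gcd_nat.absorb1)
      moreover have "gcd (x*y) Y = y" using c1 h by (metis gcd_mult_left_right_cancel coprime_commute gcd_nat.absorb1 mult.commute)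
      moreover have "gcd (x'*y') Y = y'" using c1 h by (metis gcd_mult_left_right_cancel coprime_commute gcd_nat.absorb1 mult.commute)
      ultimately show "x = x' \<and> y = y'" using h(5) by metis
    qed
    show "(\<lambda>(x,y). x*y) ` ({x. x dvd X} \<times> {y. y dvd Y}) = {a. a dvd X*Y}"
    proof
      show "(\<lambda>(x,y). x*y) ` ({x. x dvd X} \<times> {y. y dvd Y}) \<subseteq> {a. a dvd X*Y}"
        by (auto intro: mult_dvd_mono)
      show "{a. a dvd X*Y} \<subseteq> (\<lambda>(x,y). x*y) ` ({x. x dvd X} \<times> {y. y dvd Y})"
      proof
        fix a assume "a \<in> {a. a dvd X*Y}"
        then obtain x y where "a = x*y" "x dvd X" "y dvd Y" by (auto elim: dvd_productE)
        then show "a \<in> (\<lambda>(x,y). x*y) ` ({x. x dvd X} \<times> {y. y dvd Y})" by auto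
      qed
    qed
  qed
  have "(\<Sum>a\<in>{a. a dvd X*Y}. f a) = (\<Sum>p\<in>{x. x dvd X} \<times> {y. y dvd Y}. f ((\<lambda>(x,y). x*y) p))"
    using sum.reindex_bij_betw[OF bij, of f] by simp
  also have "\<dots> = (\<Sum>x\<in>{x. x dvd X}. \<Sum>y\<in>{y. y dvd Y}. f (x*y))"
    unfolding sum.cartesian_product by (rule sum.cong) auto
  finally show ?thesis .
qed

lemma mu_mult:
  assumes "coprime (a::nat) b"
  shows "moebius_mu (a*b) = moebius_mu a * moebius_mu b"
proof (cases "a = 0 \<or> b = 0")
  case True
  then show ?thesis using assms by (auto simp: moebius_mu_def)
next
  case False
  then have nz: "a \<noteq> 0" "b \<noteq> 0" by auto
  have sq: "squarefree (a*b) \<longleftrightarrow> squarefree a \<and> squarefree b"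
    using assms squarefree_mult_coprime squarefree_multD by metis
  have disj: "prime_factors a \<inter> prime_factors b = {}"
  proof (rule ccontr)
    assume "prime_factors a \<inter> prime_factors b \<noteq> {}"
    then obtain p where "p \<in> prime_factors a" "p \<in> prime_factors b" by auto
    then have "prime p" "p dvd a" "p dvd b" by (auto simp: in_prime_factors_iff)
    then show False using assms by (metis coprime_common_divisor not_prime_unit)
  qed
  have "card (prime_factors (a*b)) = card (prime_factors a) + card (prime_factors b)"
    using nz disj by (simp add: prime_factors_product card_Un_disjoint)
  then show ?thesis using nz sq by (auto simp: moebius_mu_def power_add)
qed

lemma mu_primepow:
  assumes "prime (p::nat)"
  shows "moebius_mu (p^i) = (if i = 0 then 1 else if i = 1 then -1 else 0)"
proof -
  have "\<not> is_unit p" using assms by auto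
  moreover have "squarefree p" using assms squarefree_prime by auto
  ultimately show ?thesis using assms
    by (auto simp: moebius_mu_def squarefree_power_iff prime_prime_factors prime_gt_0_nat)
qed

lemma cm_mult:
  assumes "completely_multiplicative w" "x > 0" "y > 0"
  shows "w (x*y) = w x * w y"
  using assms unfolding completely_multiplicative_def by auto

lemma cm_pow:
  assumes "completely_multiplicative w" "(p::nat) > 0"
  shows "w (p^i) = w p ^ i"
proof (induction i)
  case 0 then show ?case using assms by (simp add: completely_multiplicative_def)
next
  case (Suc i) then show ?case using assms cm_mult[OF assms(1), of p "p^i"] by simp
qed

lemma divsum_primepow:
  assumes "prime (p::nat)"
  shows "(\<Sum>d\<in>{d. d dvd p^n}. f d) = (\<Sum>i\<le>n. f (p^i))"
proof -
  have "{d. d dvd p^n} = (\<lambda>i. p^i) ` {..n}" using divides_primepow_nat[OF assms] by auto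
  moreover have "inj_on (\<lambda>i. p^i) {..n}"
    using prime_gt_1_nat[OF assms] by (auto intro!: inj_onI)
  ultimately show ?thesis by (simp add: sum.reindex)
qed

lemma mu_sum:
  "(\<Sum>a\<le>i. (if a = 0 then 1 else if a = 1 then -1 else 0) * f a) = (if i = 0 then f 0 else f 0 - f (1::nat) :: complex)"
  by (induction i) auto


lemma coprime_exp_sum:
  fixes g :: "nat \<Rightarrow> nat \<Rightarrow> complex"
  shows "(\<Sum>s\<le>a. \<Sum>t\<le>b. if s=0 \<or> t=0 then g s t else 0) = (\<Sum>s\<le>a. g s 0) + (\<Sum>t\<le>b. g 0 t) - g 0 0"
proof (induction a)
  case 0 then show ?case by simp
next
  case (Suc a)
  have "(\<Sum>t\<le>b. if Suc a = 0 \<or> t = 0 then g (Suc a) t else 0) = g (Suc a) 0"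
    by (simp add: sum.delta')
  with Suc show ?case by simp
qed

context
  fixes x y :: complex and k J :: "nat \<Rightarrow> complex" and n :: nat
  assumes Jdef: "\<And>i. i \<le> n \<Longrightarrow> J i = k i - (if i<n then x*k(i+1) else 0) - (if 0<i then y*k(i-1) else 0)
                      + (if 0<i \<and> i<n then x*y*k i else 0)"
    and n1: "1 \<le> n"
begin

lemma loc_A:
  assumes "j + m < n"
  shows "(\<Sum>s\<le>m. x^s * J(j+s)) = (k j - (if 0<j then y*k(j-1) else 0))
          - x^(m+1) * (k (j+m+1) - y*k(j+m))
          - (if j=0 then x*y*k 0 else 0)"
  using assms
proof (induction m)
  case 0
  then show ?case using Jdef[of j] by (auto simp: algebra_simps)
next
  case (Suc m)
  have JS: "J (j + Suc m) = k (j+Suc m) - x*k(j+Suc m+1) - y*k(j+m) + x*y*k(j+Suc m)"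
    using Jdef[of "j+Suc m"] Suc.prems by auto
  have S: "(\<Sum>s\<le>Suc m. x^s*J(j+s)) = (\<Sum>s\<le>m. x^s*J(j+s)) + x^Suc m * J(j+Suc m)"
    by (rule sum.atMost_Suc)
  have IH: "(\<Sum>s\<le>m. x^s * J(j+s)) = (k j - (if 0<j then y*k(j-1) else 0))
          - x^(m+1) * (k (j+m+1) - y*k(j+m))
          - (if j=0 then x*y*k 0 else 0)" using Suc by simp
  show ?case unfolding S IH JS by (simp add: algebra_simps)
qed

lemma loc_up:
  assumes "j \<le> n"
  shows "(\<Sum>s\<le>n-j. x^s * J(j+s)) = (k j - (if 0<j then y*k(j-1) else 0))
          - (if j=0 then x*y*k 0 else 0)"
proof (cases "j = n")
  case True
  then show ?thesis using Jdef[of n] n1 by auto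
next
  case False
  define m where "m = n - j - 1"
  have m: "n - j = Suc m" "j + m < n" unfolding m_def using assms False by auto
  have Jn: "J n = k n - y*k(n-1)" using Jdef[of n] n1 by auto
  have S: "(\<Sum>s\<le>Suc m. x^s*J(j+s)) = (\<Sum>s\<le>m. x^s*J(j+s)) + x^Suc m * J(j+Suc m)"
    by (rule sum.atMost_Suc)
  have e1: "k(j+m+1) = k n" and e2: "k(j+m) = k(n-1)" and e3: "J (j+Suc m) = J n"
  proof -
    have "Suc (j+m) = n" using m by arith
    then show "k(j+m+1) = k n" "k(j+m) = k(n-1)" "J (j+Suc m) = J n" by auto
  qed
  show ?thesis unfolding m(1) S loc_A[OF m(2)] e1 e2 e3 Jn by (simp add: algebra_simps)
qed

lemma loc_down:
  assumes "m < n"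
  shows "(\<Sum>t\<le>m. y^t * J(m-t)) = k m - x*k(m+1)"
  using assms
proof (induction m)
  case 0 then show ?case using Jdef[of 0] by auto
next
  case (Suc m)
  have "(\<Sum>t\<le>Suc m. y^t * J(Suc m-t)) = J (Suc m) + y * (\<Sum>t\<le>m. y^t * J(m-t))"
    by (subst sum.atMost_Suc_shift) (simp add: sum_distrib_left algebra_simps del: sum.atMost_Suc)
  moreover have "J (Suc m) = k (Suc m) - x*k(Suc m+1) - y*k m + x*y*k(Suc m)"
    using Jdef[of "Suc m"] Suc.prems by auto
  ultimately show ?case using Suc by (simp add: algebra_simps)
qed

lemma loc_main:
  assumes "j \<le> n"
  shows "(\<Sum>s\<le>n-j. \<Sum>t\<le>j. if s=0 \<or> t=0 then x^s*y^t*J(j+s-t) else 0) = (1 - x*y) * k j"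
proof -
  have "(\<Sum>s\<le>n-j. \<Sum>t\<le>j. if s=0 \<or> t=0 then x^s*y^t*J(j+s-t) else 0)
     = (\<Sum>s\<le>n-j. x^s * J(j+s)) + (\<Sum>t\<le>j. y^t * J(j-t)) - J j"
    by (simp add: coprime_exp_sum)
  also have "\<dots> = (1 - x*y) * k j"
  proof (cases j)
    case 0
    then show ?thesis using loc_up[OF assms] by (simp add: algebra_simps)
  next
    case (Suc m)
    have "(\<Sum>t\<le>j. y^t * J(j-t)) = J j + y * (\<Sum>t\<le>m. y^t * J(m-t))"
      unfolding Suc by (subst sum.atMost_Suc_shift) (simp add: sum_distrib_left algebra_simps del: sum.atMost_Suc)
    also have "\<dots> = J j + y * (k m - x*k(m+1))" using loc_down[of m] Suc assms by simp
    finally have T: "(\<Sum>t\<le>j. y^t * J(j-t)) = J j + y * (k m - x*k(m+1))" .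
    have U: "(\<Sum>s\<le>n-j. x^s * J(j+s)) = k j - y*k m" using loc_up[OF assms] Suc by simp
    show ?thesis unfolding T U using Suc by (simp add: algebra_simps)
  qed
  finally show ?thesis .
qed

end


definition Jop :: "(nat \<Rightarrow> complex) \<Rightarrow> (nat \<Rightarrow> complex) \<Rightarrow> nat \<Rightarrow> (nat \<Rightarrow> complex) \<Rightarrow> nat \<Rightarrow> complex" where
  "Jop w1 w2 L K g = (\<Sum>a\<in>{a. a dvd g}. \<Sum>b\<in>{b. b dvd L div g}.
      moebius_mu a * moebius_mu b * w2 a * w1 b * K (b * g div a))"

definition Sop :: "(nat \<Rightarrow> complex) \<Rightarrow> (nat \<Rightarrow> complex) \<Rightarrow> nat \<Rightarrow> (nat \<Rightarrow> complex) \<Rightarrow> nat \<Rightarrow> complex" where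
  "Sop w1 w2 L K B = (\<Sum>d\<in>{d. d dvd L div B}. \<Sum>e\<in>{e. e dvd B}.
      (if coprime d e then w1 d * w2 e else 0) * Jop w1 w2 L K (B * d div e))"

definition cp :: "(nat \<Rightarrow> complex) \<Rightarrow> (nat \<Rightarrow> complex) \<Rightarrow> nat \<Rightarrow> complex" where
  "cp w1 w2 L = (\<Prod>p\<in>{p. prime p \<and> p dvd L}. 1 - w1 p * w2 p)"

definition Phi :: "(nat \<Rightarrow> complex) \<Rightarrow> (nat \<Rightarrow> complex) \<Rightarrow> nat \<Rightarrow> bool" where
  "Phi w1 w2 L \<longleftrightarrow> (\<forall>K B. B dvd L \<longrightarrow> Sop w1 w2 L K B = cp w1 w2 L * K B)"

lemma linJ1: "Jop w1 w2 L (\<lambda>h. \<Sum>i\<in>I. F i h) g = (\<Sum>i\<in>I. Jop w1 w2 L (F i) g)"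
  unfolding Jop_def by (simp add: sum_distrib_left sum.swap[of _ I])

lemma linJc: "Jop w1 w2 L (\<lambda>h. c * F h) g = c * Jop w1 w2 L F g"
  unfolding Jop_def by (simp add: sum_distrib_left algebra_simps)

lemma linSc: "Sop w1 w2 L (\<lambda>h. c * F h) B = c * Sop w1 w2 L F B"
  unfolding Sop_def linJc by (simp add: sum_distrib_left algebra_simps)

lemma div_mult_arith:
  fixes aP gP aM gM bP bM :: nat
  assumes "aP dvd gP" "aM dvd gM" "aP > 0" "aM > 0"
  shows "(bP*bM) * (gP*gM) div (aP*aM) = (bP*gP div aP) * (bM*gM div aM)"
proof -
  obtain u v where "gP = aP*u" "gM = aM*v" using assms by (auto elim!: dvdE)
  then show ?thesis using assms by (simp add: algebra_simps)
qed

lemma dvd_div_mult_aux: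
  fixes B d e A :: nat
  assumes "e dvd B" "d dvd A"
  shows "B * d div e dvd B * A"
proof (cases "e = 0")
  case True then show ?thesis using assms by simp
next
  case False
  obtain u where u: "B = e*u" using assms by (auto elim!: dvdE)
  then have "B * d div e = u * d" using False by simp
  then show ?thesis using u assms by (simp add: mult_dvd_mono)
qed


context
  fixes w1 w2 :: "nat \<Rightarrow> complex"
  assumes cm1: "completely_multiplicative w1" and cm2: "completely_multiplicative w2"
begin

lemma Jmult:
  fixes P M gP gM :: nat
  assumes cop: "coprime P M" and pos: "P > 0" "M > 0" and g: "gP dvd P" "gM dvd M"
  shows "Jop w1 w2 (P*M) K (gP*gM) = Jop w1 w2 P (\<lambda>h. Jop w1 w2 M (\<lambda>m. K (h*m)) gM) gP"
proof -
  have gpos: "gP > 0" "gM > 0" using g pos by (auto intro: dvd_pos_nat)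
  have cg: "coprime gP gM" using cop g by (rule coprime_divisors[rotated 2])
  have e1: "P*M div (gP*gM) = (P div gP) * (M div gM)"
  proof -
    obtain u v where "P = gP*u" "M = gM*v" using g by (auto elim!: dvdE)
    then show ?thesis using gpos by (simp add: algebra_simps)
  qed
  have dq: "P div gP dvd P" "M div gM dvd M" using g by (auto elim!: dvdE)
  have cq: "coprime (P div gP) (M div gM)" using dq cop by (rule coprime_divisors)
  have qpos: "P div gP > 0" "M div gM > 0" using dq pos by (auto intro: dvd_pos_nat)
  define c where "c = (\<lambda>a b. moebius_mu a * moebius_mu b * w2 a * w1 b)"
  have "Jop w1 w2 (P*M) K (gP*gM) =
    (\<Sum>a\<in>{a. a dvd gP*gM}. \<Sum>b\<in>{b. b dvd (P div gP) * (M div gM)}. c a b * K (b * (gP*gM) div a))"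
    unfolding Jop_def e1 c_def by simp
  also have "\<dots> = (\<Sum>aP\<in>{a. a dvd gP}. \<Sum>aM\<in>{a. a dvd gM}. \<Sum>bP\<in>{b. b dvd P div gP}. \<Sum>bM\<in>{b. b dvd M div gM}.
        c (aP*aM) (bP*bM) * K ((bP*bM) * (gP*gM) div (aP*aM)))"
    by (simp add: divsum_mult[OF cg gpos] divsum_mult[OF cq qpos])
  also have "\<dots> = (\<Sum>aP\<in>{a. a dvd gP}. \<Sum>aM\<in>{a. a dvd gM}. \<Sum>bP\<in>{b. b dvd P div gP}. \<Sum>bM\<in>{b. b dvd M div gM}.
        c aP bP * (c aM bM * K ((bP*gP div aP) * (bM*gM div aM))))"
  proof (intro sum.cong refl)
    fix aP aM bP bM assume h: "aP \<in> {a. a dvd gP}" "aM \<in> {a. a dvd gM}" "bP \<in> {b. b dvd P div gP}" "bM \<in> {b. b dvd M div gM}"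
    have pos2: "aP > 0" "aM > 0" "bP > 0" "bM > 0" using h gpos qpos by (auto intro: dvd_pos_nat)
    have "coprime aP aM" using h cg by (auto intro: coprime_divisors)
    moreover have "coprime bP bM" using h cq by (auto intro: coprime_divisors)
    ultimately have "c (aP*aM) (bP*bM) = c aP bP * c aM bM"
      unfolding c_def using mu_mult cm_mult[OF cm1] cm_mult[OF cm2] pos2 by simp
    moreover have "(bP*bM) * (gP*gM) div (aP*aM) = (bP*gP div aP) * (bM*gM div aM)"
      using div_mult_arith h pos2 by auto
    ultimately show "c (aP*aM) (bP*bM) * K ((bP*bM) * (gP*gM) div (aP*aM)) =
        c aP bP * (c aM bM * K ((bP*gP div aP) * (bM*gM div aM)))" by simp
  qed
  also have "\<dots> = (\<Sum>aP\<in>{a. a dvd gP}. \<Sum>bP\<in>{b. b dvd P div gP}. \<Sum>aM\<in>{a. a dvd gM}. \<Sum>bM\<in>{b. b dvd M div gM}.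
        c aP bP * (c aM bM * K ((bP*gP div aP) * (bM*gM div aM))))"
    by (rule sum.cong[OF refl], rule sum.swap)
  also have "\<dots> = Jop w1 w2 P (\<lambda>h. Jop w1 w2 M (\<lambda>m. K (h*m)) gM) gP"
    unfolding Jop_def c_def by (simp add: sum_distrib_left mult.assoc)
  finally show ?thesis .
qed


lemma Smult:
  fixes P M BP BM :: nat
  assumes cop: "coprime P M" and pos: "P > 0" "M > 0" and g: "BP dvd P" "BM dvd M"
  shows "Sop w1 w2 (P*M) K (BP*BM) = Sop w1 w2 P (\<lambda>h. Sop w1 w2 M (\<lambda>m. K (h*m)) BM) BP"
proof -
  define C where "C = (\<lambda>d e. if coprime d e then w1 d * w2 e else 0)"
  have gpos: "BP > 0" "BM > 0" using g pos by (auto intro: dvd_pos_nat)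
  have cg: "coprime BP BM" using cop g by (rule coprime_divisors[rotated 2])
  have e1: "P*M div (BP*BM) = (P div BP) * (M div BM)"
  proof -
    obtain u v where "P = BP*u" "M = BM*v" using g by (auto elim!: dvdE)
    then show ?thesis using gpos by (simp add: algebra_simps)
  qed
  have dq: "P div BP dvd P" "M div BM dvd M" using g by (auto elim!: dvdE)
  have cq: "coprime (P div BP) (M div BM)" using dq cop by (rule coprime_divisors)
  have qpos: "P div BP > 0" "M div BM > 0" using dq pos by (auto intro: dvd_pos_nat)
  have "Sop w1 w2 (P*M) K (BP*BM) =
     (\<Sum>d\<in>{d. d dvd (P div BP) * (M div BM)}. \<Sum>e\<in>{e. e dvd BP*BM}. C d e * Jop w1 w2 (P*M) K (BP*BM*d div e))"
    unfolding Sop_def e1 C_def by simp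
  also have "\<dots> = (\<Sum>dP\<in>{d. d dvd P div BP}. \<Sum>dM\<in>{d. d dvd M div BM}. \<Sum>eP\<in>{e. e dvd BP}. \<Sum>eM\<in>{e. e dvd BM}.
      C (dP*dM) (eP*eM) * Jop w1 w2 (P*M) K (BP*BM*(dP*dM) div (eP*eM)))"
    by (simp add: divsum_mult[OF cg gpos] divsum_mult[OF cq qpos])
  also have "\<dots> = (\<Sum>dP\<in>{d. d dvd P div BP}. \<Sum>dM\<in>{d. d dvd M div BM}. \<Sum>eP\<in>{e. e dvd BP}. \<Sum>eM\<in>{e. e dvd BM}.
      C dP eP * (C dM eM * Jop w1 w2 P (\<lambda>h. Jop w1 w2 M (\<lambda>m. K (h*m)) (BM*dM div eM)) (BP*dP div eP)))"
  proof (intro sum.cong refl)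
    fix dP dM eP eM assume h: "dP \<in> {d. d dvd P div BP}" "dM \<in> {d. d dvd M div BM}" "eP \<in> {e. e dvd BP}" "eM \<in> {e. e dvd BM}"
    have pos2: "dP > 0" "dM > 0" "eP > 0" "eM > 0" using h gpos qpos by (auto intro: dvd_pos_nat)
    have dvP: "dP dvd P" "eP dvd P" using h dq g by (auto intro: dvd_trans)
    have dvM: "dM dvd M" "eM dvd M" using h dq g by (auto intro: dvd_trans)
    have c1: "coprime dP eM" "coprime eP dM" using cop dvP dvM by (auto intro: coprime_divisors)
    have "coprime (dP*dM) (eP*eM) \<longleftrightarrow> coprime dP eP \<and> coprime dM eM"
      using c1 by (auto simp: coprime_commute)
    then have cc: "C (dP*dM) (eP*eM) = C dP eP * C dM eM"
      unfolding C_def using cm_mult[OF cm1] cm_mult[OF cm2] pos2 by simp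
    have ar: "BP*BM*(dP*dM) div (eP*eM) = (BP*dP div eP) * (BM*dM div eM)"
    proof -
      obtain u v where "BP = eP*u" "BM = eM*v" using h by (auto elim!: dvdE)
      then show ?thesis using pos2 by (simp add: algebra_simps)
    qed
    have d1: "BP*dP div eP dvd P"
      using dvd_div_mult_aux[of eP BP dP "P div BP"] h g by simp
    have d2: "BM*dM div eM dvd M"
      using dvd_div_mult_aux[of eM BM dM "M div BM"] h g by simp
    show "C (dP*dM) (eP*eM) * Jop w1 w2 (P*M) K (BP*BM*(dP*dM) div (eP*eM)) =
      C dP eP * (C dM eM * Jop w1 w2 P (\<lambda>h. Jop w1 w2 M (\<lambda>m. K (h*m)) (BM*dM div eM)) (BP*dP div eP))"
      unfolding cc ar Jmult[OF cop pos d1 d2] by simp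
  qed
  also have "\<dots> = (\<Sum>dP\<in>{d. d dvd P div BP}. \<Sum>eP\<in>{e. e dvd BP}. \<Sum>dM\<in>{d. d dvd M div BM}. \<Sum>eM\<in>{e. e dvd BM}.
      C dP eP * (C dM eM * Jop w1 w2 P (\<lambda>h. Jop w1 w2 M (\<lambda>m. K (h*m)) (BM*dM div eM)) (BP*dP div eP)))"
    by (rule sum.cong[OF refl], rule sum.swap)
  also have "\<dots> = (\<Sum>dP\<in>{d. d dvd P div BP}. \<Sum>eP\<in>{e. e dvd BP}.
      C dP eP * Jop w1 w2 P (\<lambda>h. \<Sum>dM\<in>{d. d dvd M div BM}. \<Sum>eM\<in>{e. e dvd BM}.
          C dM eM * Jop w1 w2 M (\<lambda>m. K (h*m)) (BM*dM div eM)) (BP*dP div eP))"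
  proof -
    have lin: "\<And>F g. Jop w1 w2 P (\<lambda>h. \<Sum>dM\<in>{d. d dvd M div BM}. \<Sum>eM\<in>{e. e dvd BM}. C dM eM * F dM eM h) g
       = (\<Sum>dM\<in>{d. d dvd M div BM}. \<Sum>eM\<in>{e. e dvd BM}. C dM eM * Jop w1 w2 P (F dM eM) g)"
      by (simp only: linJ1 linJc)
    show ?thesis
      by (simp only: lin[of "\<lambda>dM eM h. Jop w1 w2 M (\<lambda>m. K (h*m)) (BM*dM div eM)"] sum_distrib_left)
  qed
  also have "\<dots> = Sop w1 w2 P (\<lambda>h. Sop w1 w2 M (\<lambda>m. K (h*m)) BM) BP"
    unfolding Sop_def C_def by simp
  finally show ?thesis .
qed

lemma cp_mult:
  fixes P M :: nat
  assumes cop: "coprime P M" and pos: "P > 0" "M > 0"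
  shows "cp w1 w2 (P*M) = cp w1 w2 P * cp w1 w2 M"
proof -
  have eq: "{p. prime p \<and> p dvd P*M} = {p. prime p \<and> p dvd P} \<union> {p. prime p \<and> p dvd M}"
    by (auto simp: prime_dvd_mult_iff)
  have fin: "finite {p. prime p \<and> p dvd P}" "finite {p. prime p \<and> p dvd M}"
  proof -
    have "finite {d. d dvd P}" "finite {d. d dvd M}" using pos by auto
    then show "finite {p. prime p \<and> p dvd P}" "finite {p. prime p \<and> p dvd M}"
      by (auto elim: finite_subset[rotated])
  qed
  have dis: "{p. prime p \<and> p dvd P} \<inter> {p. prime p \<and> p dvd M} = {}"
    using cop by (auto dest: coprime_common_divisor[OF cop] simp: not_prime_unit)
  show ?thesis unfolding cp_def eq using prod.union_disjoint[OF fin dis] by simp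
qed

lemma Phi_mult:
  fixes P M :: nat
  assumes cop: "coprime P M" and pos: "P > 0" "M > 0" and hP: "Phi w1 w2 P" and hM: "Phi w1 w2 M"
  shows "Phi w1 w2 (P*M)"
  unfolding Phi_def
proof (intro allI impI)
  fix K :: "nat \<Rightarrow> complex" and B assume "B dvd P*M"
  then obtain BP BM where B: "B = BP*BM" "BP dvd P" "BM dvd M" by (auto elim: dvd_productE)
  have "Sop w1 w2 (P*M) K B = Sop w1 w2 P (\<lambda>h. Sop w1 w2 M (\<lambda>m. K (h*m)) BM) BP"
    unfolding B(1) by (rule Smult[OF cop pos B(2,3)])
  also have "\<dots> = Sop w1 w2 P (\<lambda>h. cp w1 w2 M * K (h*BM)) BP"
    using hM B(3) unfolding Phi_def by (simp add: mult.commute)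
  also have "\<dots> = cp w1 w2 M * (cp w1 w2 P * K (BP*BM))"
    unfolding linSc using hP B(2) unfolding Phi_def by simp
  finally show "Sop w1 w2 (P*M) K B = cp w1 w2 (P*M) * K B"
    using cp_mult[OF cop pos] B(1) by simp
qed


lemma Jop_pp:
  fixes p n i :: nat and K :: "nat \<Rightarrow> complex"
  assumes p: "prime p" and i: "i \<le> n"
  shows "Jop w1 w2 (p^n) K (p^i) = K (p^i) - (if i<n then w1 p * K (p^(i+1)) else 0)
           - (if 0<i then w2 p * K (p^(i-1)) else 0) + (if 0<i \<and> i<n then w1 p * w2 p * K (p^i) else 0)"
proof -
  have pp: "p > 0" using p prime_gt_0_nat by blast
  have e: "p^n div p^i = p^(n-i)" using i pp by (simp add: power_diff)
  define x where "x = w1 p" define y where "y = w2 p"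
  have "Jop w1 w2 (p^n) K (p^i) = (\<Sum>a\<le>i. \<Sum>b\<le>n-i. moebius_mu (p^a) * moebius_mu (p^b) * w2 (p^a) * w1 (p^b) * K (p^b * p^i div p^a))"
    unfolding Jop_def e by (simp only: divsum_primepow[OF p])
  also have "\<dots> = (\<Sum>a\<le>i. (if a = 0 then 1 else if a = 1 then -1 else 0) *
      (\<Sum>b\<le>n-i. (if b = 0 then 1 else if b = 1 then -1 else 0) * (y^a * x^b * K (p^(i+b-a)))))"
    unfolding sum_distrib_left
  proof (intro sum.cong refl)
    fix a b assume ab: "a \<in> {..i}" "b \<in> {..n-i}"
    have "p^b * p^i = p^(i+b)" by (simp add: power_add mult.commute)
    also have "\<dots> div p^a = p^(i+b-a)" using ab pp by (simp add: power_diff)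
    finally have "p^b * p^i div p^a = p^(i+b-a)" .
    then show "moebius_mu (p^a) * moebius_mu (p^b) * w2 (p^a) * w1 (p^b) * K (p^b * p^i div p^a) =
       (if a = 0 then 1 else if a = 1 then -1 else 0) * ((if b = 0 then 1 else if b = 1 then -1 else 0) * (y^a * x^b * K (p^(i+b-a))))"
      using mu_primepow[OF p] cm_pow[OF cm1 pp] cm_pow[OF cm2 pp] unfolding x_def y_def by (simp add: algebra_simps)
  qed
  also have "\<dots> = K (p^i) - (if i<n then x * K (p^(i+1)) else 0)
           - (if 0<i then y * K (p^(i-1)) else 0) + (if 0<i \<and> i<n then x * y * K (p^i) else 0)"
    unfolding mu_sum using i by (auto simp: algebra_simps)
  finally show ?thesis unfolding x_def y_def .
qed

lemma cp_pp:
  assumes p: "prime (p::nat)" and n: "n \<ge> 1"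
  shows "cp w1 w2 (p^n) = 1 - w1 p * w2 p"
proof -
  have "{q. prime q \<and> q dvd p^n} = {p}"
    using p n by (auto dest: prime_dvd_power primes_dvd_imp_eq intro: dvd_power)
  then show ?thesis unfolding cp_def by simp
qed

lemma Phi_pp:
  assumes p: "prime (p::nat)" and n: "n \<ge> 1"
  shows "Phi w1 w2 (p^n)"
  unfolding Phi_def
proof (intro allI impI)
  fix K :: "nat \<Rightarrow> complex" and B assume "B dvd p^n"
  then obtain j where j: "j \<le> n" "B = p^j" using divides_primepow_nat[OF p] by auto
  have pp: "p > 0" using p prime_gt_0_nat by blast
  define x where "x = w1 p" define y where "y = w2 p"
  define k where "k = (\<lambda>i. K (p^i))"
  define Jx where "Jx = (\<lambda>i. Jop w1 w2 (p^n) K (p^i))"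
  have Jdef: "\<And>i. i \<le> n \<Longrightarrow> Jx i = k i - (if i<n then x*k(i+1) else 0) - (if 0<i then y*k(i-1) else 0)
                      + (if 0<i \<and> i<n then x*y*k i else 0)"
    unfolding Jx_def k_def x_def y_def using Jop_pp[OF p] by simp
  have e: "p^n div p^j = p^(n-j)" using j pp by (simp add: power_diff)
  have "Sop w1 w2 (p^n) K B = (\<Sum>s\<le>n-j. \<Sum>t\<le>j. (if coprime (p^s) (p^t) then w1 (p^s) * w2 (p^t) else 0)
            * Jop w1 w2 (p^n) K (p^j * p^s div p^t))"
    unfolding Sop_def j(2) e by (simp only: divsum_primepow[OF p])
  also have "\<dots> = (\<Sum>s\<le>n-j. \<Sum>t\<le>j. if s=0 \<or> t=0 then x^s*y^t*Jx(j+s-t) else 0)"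
  proof (intro sum.cong refl)
    fix s t assume st: "s \<in> {..n-j}" "t \<in> {..j}"
    have "p^j * p^s = p^(j+s)" by (simp add: power_add)
    also have "\<dots> div p^t = p^(j+s-t)" using st pp by (simp add: power_diff)
    finally have "p^j * p^s div p^t = p^(j+s-t)" .
    moreover have "coprime (p^s) (p^t) \<longleftrightarrow> s = 0 \<or> t = 0"
      using p by auto
    ultimately show "(if coprime (p^s) (p^t) then w1 (p^s) * w2 (p^t) else 0) * Jop w1 w2 (p^n) K (p^j * p^s div p^t)
        = (if s=0 \<or> t=0 then x^s*y^t*Jx(j+s-t) else 0)"
      using cm_pow[OF cm1 pp] cm_pow[OF cm2 pp] unfolding x_def y_def Jx_def by simp
  qed
  also have "\<dots> = (1 - x*y) * k j"
    using loc_main[OF Jdef n j(1)] by simp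
  finally show "Sop w1 w2 (p^n) K B = cp w1 w2 (p^n) * K B"
    using cp_pp[OF p n] j(2) unfolding x_def y_def k_def by simp
qed

lemma Phi_one: "Phi w1 w2 1"
proof -
  have mu1: "moebius_mu 1 = 1" by (simp add: moebius_mu_def)
  have w: "w1 1 = 1" "w2 1 = 1" using cm1 cm2 by (auto simp: completely_multiplicative_def)
  have "{p. prime p \<and> p dvd (1::nat)} = {}" by auto
  then have cp1: "cp w1 w2 1 = 1" unfolding cp_def by (simp only: prod.empty)
  show ?thesis unfolding Phi_def Sop_def Jop_def using mu1 w cp1 by simp
qed

lemma Phi_all: "L > 0 \<Longrightarrow> Phi w1 w2 L"
proof (induction L rule: less_induct)
  case (less L)
  show ?case
  proof (cases "L = 1")
    case True then show ?thesis using Phi_one by simp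
  next
    case False
    then obtain p where p: "prime p" "p dvd L" using prime_factor_nat by blast
    define n where "n = multiplicity p L"
    have nu: "\<not> is_unit p" using p by auto
    obtain M where M: "L = p^n * M" "\<not> p dvd M"
      using multiplicity_decompose'[of L p] less.prems nu unfolding n_def by auto
    have n1: "n \<ge> 1" using p less.prems nu unfolding n_def
      by (simp add: multiplicity_gt_zero_iff Suc_le_eq)
    have Mpos: "M > 0" using M less.prems by (auto intro: gr0I)
    have ppos: "p^n > 0" using p prime_gt_0_nat by simp
    have "p^n \<ge> 2"
    proof -
      have "p \<ge> 2" using p prime_ge_2_nat by blast
      also have "p \<le> p^n" using power_increasing[of 1 n p] n1 prime_ge_1_nat[OF p(1)] by simp
      finally show ?thesis .
    qed
    then have "M < L" using M Mpos by simp
    then have hM: "Phi w1 w2 M" using less.IH Mpos by blast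
    have cop: "coprime (p^n) M" using prime_imp_coprime[OF p(1) M(2)] by simp
    show ?thesis unfolding M(1) by (rule Phi_mult[OF cop ppos Mpos Phi_pp[OF p(1) n1] hM])
  qed
qed

end

lemma pair_sum:
  fixes A B :: nat and f :: "nat \<Rightarrow> nat \<Rightarrow> complex"
  assumes "A > 0" "B > 0"
  shows "(\<Sum>(d, e)\<in>{(d, e). d dvd A \<and> e dvd B \<and> coprime d e}. f d e) =
     (\<Sum>d\<in>{d. d dvd A}. \<Sum>e\<in>{e. e dvd B}. if coprime d e then f d e else 0)"
proof -
  have fin: "finite ({d. d dvd A} \<times> {e. e dvd B})" using assms by auto
  have "{(d, e). d dvd A \<and> e dvd B \<and> coprime d e} = {x \<in> {d. d dvd A} \<times> {e. e dvd B}. coprime (fst x) (snd x)}"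
    by auto
  then have "(\<Sum>(d, e)\<in>{(d, e). d dvd A \<and> e dvd B \<and> coprime d e}. f d e) =
     (\<Sum>x\<in>{d. d dvd A} \<times> {e. e dvd B}. if coprime (fst x) (snd x) then f (fst x) (snd x) else 0)"
    using sum.inter_filter[OF fin, of "\<lambda>x. f (fst x) (snd x)" "\<lambda>x. coprime (fst x) (snd x)"]
    by (simp add: case_prod_beta)
  also have "\<dots> = (\<Sum>d\<in>{d. d dvd A}. \<Sum>e\<in>{e. e dvd B}. if coprime d e then f d e else 0)"
    unfolding sum.cartesian_product by (rule sum.cong) auto
  finally show ?thesis .
qed

theorem lemma7p2:
  fixes L A B :: nat and \<omega>1 \<omega>2 K :: "nat \<Rightarrow> complex" and J :: "nat \<Rightarrow> complex"
  assumes "L > 0"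
    and "completely_multiplicative \<omega>1" and "completely_multiplicative \<omega>2"
    and "\<And>p. prime p \<Longrightarrow> p dvd L \<Longrightarrow> 1 - \<omega>1 p * \<omega>2 p \<noteq> 0"
    and "\<And>g. g dvd L \<Longrightarrow> J g =
           (\<Sum>a\<in>{a. a dvd g}. \<Sum>b\<in>{b. b dvd L div g}.
              moebius_mu a * moebius_mu b * \<omega>2 a * \<omega>1 b * K (b * g div a))"
    and "L = A * B"
  shows "K B = (\<Prod>p\<in>{p. prime p \<and> p dvd L}. inverse (1 - \<omega>1 p * \<omega>2 p)) *
           (\<Sum>(d, e)\<in>{(d, e). d dvd A \<and> e dvd B \<and> coprime d e}.
              \<omega>1 d * \<omega>2 e * J (B * d div e))"
proof -
  have pos: "A > 0" "B > 0" using assms(1,6) by auto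
  have AL: "A = L div B" using assms(6) pos by simp
  have "(\<Sum>(d, e)\<in>{(d, e). d dvd A \<and> e dvd B \<and> coprime d e}. \<omega>1 d * \<omega>2 e * J (B * d div e))
      = (\<Sum>d\<in>{d. d dvd A}. \<Sum>e\<in>{e. e dvd B}. if coprime d e then \<omega>1 d * \<omega>2 e * J (B * d div e) else 0)"
    by (rule pair_sum[OF pos])
  also have "\<dots> = Sop \<omega>1 \<omega>2 L K B"
    unfolding Sop_def AL[symmetric]
  proof (intro sum.cong refl)
    fix d e assume de: "d \<in> {d. d dvd A}" "e \<in> {e. e dvd B}"
    have "B * d div e dvd B * A" using dvd_div_mult_aux de by simp
    then have "J (B * d div e) = Jop \<omega>1 \<omega>2 L K (B * d div e)"
      using assms(5) assms(6) unfolding Jop_def by (simp add: mult.commute)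
    then show "(if coprime d e then \<omega>1 d * \<omega>2 e * J (B * d div e) else 0) =
        (if coprime d e then \<omega>1 d * \<omega>2 e else 0) * Jop \<omega>1 \<omega>2 L K (B * d div e)" by simp
  qed
  also have "\<dots> = cp \<omega>1 \<omega>2 L * K B"
    using Phi_all[OF assms(2,3,1)] assms(6) unfolding Phi_def by simp
  finally have S: "(\<Sum>(d, e)\<in>{(d, e). d dvd A \<and> e dvd B \<and> coprime d e}. \<omega>1 d * \<omega>2 e * J (B * d div e))
      = cp \<omega>1 \<omega>2 L * K B" .
  have fin: "finite {p. prime p \<and> p dvd L}"
    using assms(1) by (auto intro: finite_subset[of _ "{d. d dvd L}"])
  have nz: "cp \<omega>1 \<omega>2 L \<noteq> 0" unfolding cp_def using assms(4) fin by (auto simp: prod_zero_iff)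
  have inv: "(\<Prod>p\<in>{p. prime p \<and> p dvd L}. inverse (1 - \<omega>1 p * \<omega>2 p)) = inverse (cp \<omega>1 \<omega>2 L)"
    unfolding cp_def using prod_inversef[of "\<lambda>p. 1 - \<omega>1 p * \<omega>2 p"] by (simp add: comp_def)
  show ?thesis unfolding S inv using nz by simp
qed

end
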